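(* Let $\beta>0$ and let $V\in\mathbb R^{d\times d}$ be real symmetric with orthonormal eigenbasis $(e_k)$ and eigenvalues $(\lambda_k)$. Consider on $(\mathbb S^{d-1})^n$ the system \[ \dot x_i=F_i(x):=P^\perp_{x_i}\Big(\sum_{j=1}^n K_{ij}(x)Vx_j\Big),\qquad K_{ij}(x)=\frac{e^{\beta\langle x_i,Vx_j\rangle}}{\sum_{\ell=1}^n e^{\beta\langle x_i,Vx_\ell\rangle}}. \] Fix $p\in[d]$ and signs $s_1,\dots,s_n\in\{\pm1\}$, and let $x_i^*=s_ie_p$ (a pure-mode equilibrium). For tangent perturbations $x_i=(x_i^*+y_i)/\|x_i^*+y_i\|$ with $\langle y_i,x_i^*\rangle=0$, one has \[ F_i(x)=-\gamma_iy_i+\sum_{j=1}^nK_{ij}^*Vy_j+O(|y|^2),\qquad |y|:=\max_m\|y_m\|, \] so that the linearized tangent system is \[ \dot y_i=-\gamma_iy_i+\sum_{j=1}^nK_{ij}^*Vy_j,\quad i\in[n], \] where $K_{ij}^*:=K_{ij}(x^* )$ and $\gamma_i:=\lambda_ps_i\sum_{j=1}^nK_{ij}^*s_j$.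
   Context: $P^\perp_xy=y-\langle x,y\rangle x$ denotes the orthogonal projection onto $T_x\mathbb S^{d-1}$. *)

theory Defs
  imports "HOL-Analysis.Analysis"
begin

definition Pperp :: "real^'d \<Rightarrow> real^'d \<Rightarrow> real^'d" where
  "Pperp x y = y - (x \<bullet> y) *\<^sub>R x"

definition Kw :: "real \<Rightarrow> real^'d^'d \<Rightarrow> ('n::finite \<Rightarrow> real^'d) \<Rightarrow> 'n \<Rightarrow> 'n \<Rightarrow> real" where
  "Kw \<beta> V x i j =
     exp (\<beta> * (x i \<bullet> (V *v x j))) / (\<Sum>l\<in>UNIV. exp (\<beta> * (x i \<bullet> (V *v x l))))"

definition Fsys :: "real \<Rightarrow> real^'d^'d \<Rightarrow> ('n::finite \<Rightarrow> real^'d) \<Rightarrow> 'n \<Rightarrow> real^'d" where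
  "Fsys \<beta> V x i = Pperp (x i) (\<Sum>j\<in>UNIV. Kw \<beta> V x i j *\<^sub>R (V *v x j))"

end

theory Submission
  imports Defs
begin

lemma sym_dot:
  fixes V :: "real^'d^'d"
  assumes "transpose V = V"
  shows "x \<bullet> (V *v y) = (V *v x) \<bullet> y"
  by (metis assms dot_lmul_matrix vector_transpose_matrix)

lemma exp_sub_one_bound: "\<bar>exp (x::real) - 1\<bar> \<le> \<bar>x\<bar> * exp \<bar>x\<bar>"
proof (cases "x \<ge> 0")
  case True
  have "exp (-x) \<ge> 1 - x" using exp_ge_add_one_self[of "-x"] by simp
  hence "exp (-x) * exp x \<ge> (1 - x) * exp x" by (simp add: mult_right_mono)
  hence "1 \<ge> exp x - x * exp x" by (simp add: exp_minus field_simps)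
  thus ?thesis using True by simp
next
  case False
  have "exp x \<ge> 1 + x" using exp_ge_add_one_self[of x] by simp
  moreover have "exp x \<le> 1" using False by simp
  moreover have "exp \<bar>x\<bar> \<ge> 1" by simp
  ultimately show ?thesis using False
    by (smt (verit, best) mult_le_cancel_left1)
qed

lemma softmax_lip:
  fixes a b :: "'n::finite \<Rightarrow> real"
  assumes ab: "\<And>l. \<bar>a l - b l\<bar> \<le> t" and tc: "t \<le> c" and t0: "0 \<le> t"
  shows "\<bar>exp (a j) / (\<Sum>l\<in>UNIV. exp (a l)) - exp (b j) / (\<Sum>l\<in>UNIV. exp (b l))\<bar>
         \<le> 2 * exp (2 * c) * t"
proof -
  define Sa where "Sa = (\<Sum>l\<in>UNIV. exp (a l))"
  define Sb where "Sb = (\<Sum>l\<in>UNIV. exp (b l))"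
  define \<epsilon> where "\<epsilon> = t * exp c"
  have c0: "0 \<le> c" using tc t0 by linarith
  have Sb_pos: "Sb > 0" unfolding Sb_def by (intro sum_pos) auto
  have Sa_pos: "Sa > 0" unfolding Sa_def by (intro sum_pos) auto
  have eb: "\<bar>exp (a l) - exp (b l)\<bar> \<le> \<epsilon> * exp (b l)" for l
  proof -
    have "exp (a l) - exp (b l) = exp (b l) * (exp (a l - b l) - 1)"
      by (simp add: exp_diff field_simps)
    hence "\<bar>exp (a l) - exp (b l)\<bar> = exp (b l) * \<bar>exp (a l - b l) - 1\<bar>"
      by (simp add: abs_mult)
    also have "\<dots> \<le> exp (b l) * (\<bar>a l - b l\<bar> * exp \<bar>a l - b l\<bar>)"
      by (intro mult_left_mono exp_sub_one_bound) auto
    also have "\<dots> \<le> exp (b l) * (t * exp c)"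
      using ab[of l] tc t0
      by (intro mult_left_mono mult_mono) auto
    finally show ?thesis unfolding \<epsilon>_def by (simp add: algebra_simps)
  qed
  have lowa: "exp (a l) \<ge> exp (b l) * exp (- c)" for l
  proof -
    have "a l \<ge> b l - c" using ab[of l] tc by (smt (verit))
    hence "exp (a l) \<ge> exp (b l - c)" by simp
    thus ?thesis by (simp add: exp_diff exp_minus field_simps)
  qed
  have SaSb: "Sa \<ge> Sb * exp (- c)"
    unfolding Sa_def Sb_def sum_distrib_right by (intro sum_mono lowa)
  have dS: "\<bar>Sb - Sa\<bar> \<le> \<epsilon> * Sb"
  proof -
    have "\<bar>Sb - Sa\<bar> = \<bar>\<Sum>l\<in>UNIV. exp (a l) - exp (b l)\<bar>"
      unfolding Sa_def Sb_def by (simp add: sum_subtractf)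
    also have "\<dots> \<le> (\<Sum>l\<in>UNIV. \<bar>exp (a l) - exp (b l)\<bar>)" by (rule sum_abs)
    also have "\<dots> \<le> (\<Sum>l\<in>UNIV. \<epsilon> * exp (b l))" by (intro sum_mono eb)
    finally show ?thesis unfolding Sb_def sum_distrib_left .
  qed
  have ebj: "exp (b j) \<le> Sb" unfolding Sb_def
    by (rule member_le_sum) auto
  have eq: "exp (a j) / Sa - exp (b j) / Sb
      = ((exp (a j) - exp (b j)) * Sb + exp (b j) * (Sb - Sa)) / (Sa * Sb)"
    using Sa_pos Sb_pos by (simp add: field_simps)
  have num: "\<bar>(exp (a j) - exp (b j)) * Sb + exp (b j) * (Sb - Sa)\<bar> \<le> 2 * \<epsilon> * exp (b j) * Sb"
  proof -
    have "\<bar>(exp (a j) - exp (b j)) * Sb\<bar> \<le> \<epsilon> * exp (b j) * Sb"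
      using eb[of j] Sb_pos by (simp add: abs_mult mult_right_mono)
    moreover have "\<bar>exp (b j) * (Sb - Sa)\<bar> \<le> exp (b j) * (\<epsilon> * Sb)"
      using dS by (simp add: abs_mult mult_left_mono)
    ultimately show ?thesis
      using abs_triangle_ineq[of "(exp (a j) - exp (b j)) * Sb" "exp (b j) * (Sb - Sa)"]
      by (simp add: algebra_simps)
  qed
  have e0: "\<epsilon> \<ge> 0" unfolding \<epsilon>_def using t0 by simp
  have "\<bar>exp (a j) / Sa - exp (b j) / Sb\<bar> \<le> 2 * \<epsilon> * exp (b j) * Sb / (Sa * Sb)"
  proof -
    have p: "Sa * Sb > 0" using Sa_pos Sb_pos by simp
    show ?thesis unfolding eq abs_divide abs_of_pos[OF p]
      by (rule divide_right_mono[OF num]) (use p in simp)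
  qed
  also have "\<dots> = 2 * \<epsilon> * exp (b j) / Sa" using Sb_pos by simp
  also have "\<dots> \<le> 2 * \<epsilon> * exp (b j) / (Sb * exp (- c))"
    using SaSb Sb_pos Sa_pos e0 by (intro divide_left_mono) auto
  also have "\<dots> = 2 * \<epsilon> * exp c * (exp (b j) / Sb)"
    by (simp add: exp_minus field_simps)
  also have "\<dots> \<le> 2 * \<epsilon> * exp c * 1"
    using ebj Sb_pos e0 by (intro mult_left_mono) auto
  also have "\<dots> = 2 * exp (2 * c) * t"
    unfolding \<epsilon>_def
    proof -
      have e2: "exp (2 * c) = exp c * exp c" by (metis exp_add mult_2)
      show "2 * (t * exp c) * exp c * 1 = 2 * exp (2 * c) * t" unfolding e2 by (simp only: mult_1_right mult_ac)
    qed
  finally show ?thesis unfolding Sa_def Sb_def .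
qed


lemma Kw_nonneg: "Kw \<beta> V x i j \<ge> 0"
  unfolding Kw_def by (intro divide_nonneg_nonneg sum_nonneg) auto

lemma Kw_sum1: "(\<Sum>j\<in>UNIV. Kw \<beta> V (x::'n::finite \<Rightarrow> real^'d) i j) = 1"
proof -
  have "(\<Sum>l\<in>(UNIV::'n set). exp (\<beta> * (x i \<bullet> (V *v x l)))) > 0" by (intro sum_pos) auto
  thus ?thesis unfolding Kw_def sum_divide_distrib[symmetric] by simp
qed

lemma normP: "norm (x::real^'d) = 1 \<Longrightarrow> norm (v - (x \<bullet> v) *\<^sub>R x) \<le> 2 * norm v"
proof -
  assume x1: "norm x = 1"
  have "norm (v - (x \<bullet> v) *\<^sub>R x) \<le> norm v + norm ((x \<bullet> v) *\<^sub>R x)" by (rule norm_triangle_ineq4)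
  also have "norm ((x \<bullet> v) *\<^sub>R x) = \<bar>x \<bullet> v\<bar>" using x1 by simp
  also have "\<bar>x \<bullet> v\<bar> \<le> norm v" using Cauchy_Schwarz_ineq2[of x v] x1 by simp
  finally show ?thesis by simp
qed


theorem lemmaA1:
  fixes \<beta> :: real and V :: "real^'d^'d" and e :: "'d \<Rightarrow> real^'d" and lam :: "'d \<Rightarrow> real"
    and p :: 'd and s :: "'n::finite \<Rightarrow> real"
  assumes "\<beta> > 0"
    and "transpose V = V"
    and "\<And>k l. e k \<bullet> e l = (if k = l then 1 else 0)"
    and "\<And>k. V *v e k = lam k *\<^sub>R e k"
    and "\<And>i. s i = 1 \<or> s i = -1"
  shows "\<exists>C \<delta>. \<delta> > 0 \<and>
    (\<forall>y :: 'n \<Rightarrow> real^'d.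
       (\<forall>i. y i \<bullet> (s i *\<^sub>R e p) = 0) \<longrightarrow>
       Max (range (\<lambda>m. norm (y m))) \<le> \<delta> \<longrightarrow>
       (\<forall>i. norm (Fsys \<beta> V (\<lambda>m. (1 / norm (s m *\<^sub>R e p + y m)) *\<^sub>R (s m *\<^sub>R e p + y m)) i
                 - (- (lam p * s i * (\<Sum>j\<in>UNIV. Kw \<beta> V (\<lambda>m. s m *\<^sub>R e p) i j * s j)) *\<^sub>R y i
                    + (\<Sum>j\<in>UNIV. Kw \<beta> V (\<lambda>m. s m *\<^sub>R e p) i j *\<^sub>R (V *v y j))))
            \<le> C * (Max (range (\<lambda>m. norm (y m))))\<^sup>2))"
proof -
  note bpos = assms(1) and Vsym = assms(2) and eorth = assms(3) and eig = assms(4) and spm = assms(5)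
  obtain B where B0: "B > 0" and Bb: "\<And>z. norm (V *v z) \<le> B * norm z"
    using linear_bounded_pos[OF matrix_vector_mul_linear[of V]] by blast
  define c where "c = 4 * \<beta> * B"
  define L where "L = 2 * exp (2 * c) * c"
  define N where "N = real CARD('n)"
  define \<Lambda> where "\<Lambda> = \<bar>lam p\<bar>"
  define C where "C = 2 * \<Lambda> + 3 * N * L * \<Lambda> + 4 * B + 4 * N * L * B"
  have c0: "c \<ge> 0" unfolding c_def using bpos B0 by simp
  have L0: "L \<ge> 0" unfolding L_def using c0 by simp
  have N0: "N \<ge> 0" unfolding N_def by simp
  have \<Lambda>0: "\<Lambda> \<ge> 0" unfolding \<Lambda>_def by simp
  have ep1: "e p \<bullet> e p = 1" using eorth[of p p] by simp
  have nep: "norm (e p) = 1" using ep1 by (simp add: norm_eq_sqrt_inner)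
  have s2: "s m * s m = 1" for m using spm[of m] by auto
  have sabs: "\<bar>s m\<bar> = 1" for m using spm[of m] by auto
  show ?thesis
  proof (rule exI[of _ C], rule exI[of _ 1], intro conjI allI impI)
    show "(0::real) < 1" by simp
    fix y :: "'n \<Rightarrow> real^'d" and i :: 'n
    assume tan: "\<forall>i. y i \<bullet> (s i *\<^sub>R e p) = 0"
      and rle: "Max (range (\<lambda>m. norm (y m))) \<le> 1"
    define r where "r = Max (range (\<lambda>m. norm (y m)))"
    have r1: "r \<le> 1" using rle unfolding r_def .
    have ry: "norm (y m) \<le> r" for m unfolding r_def by (rule Max_ge) auto
    have r0: "r \<ge> 0" using ry[of i] norm_ge_zero[of "y i"] by linarith
    have yep: "y m \<bullet> e p = 0" for m
      using tan[rule_format, of m] sabs[of m] by (auto simp: inner_scaleR_right)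
    have yep': "e p \<bullet> y m = 0" for m using yep[of m] by (simp add: inner_commute)
    define xs where "xs = (\<lambda>m. s m *\<^sub>R e p)"
    define u where "u = (\<lambda>m. s m *\<^sub>R e p + y m)"
    define nu where "nu = (\<lambda>m. norm (u m))"
    define x where "x = (\<lambda>m. (1 / norm (s m *\<^sub>R e p + y m)) *\<^sub>R (s m *\<^sub>R e p + y m))"
    have x_eq: "x m = (1 / nu m) *\<^sub>R u m" for m unfolding x_def nu_def u_def by simp
    have nxs: "norm (xs m) = 1" for m unfolding xs_def using nep sabs by simp
    have nu2: "(nu m)\<^sup>2 = 1 + (norm (y m))\<^sup>2" for m
    proof -
      have "(nu m)\<^sup>2 = u m \<bullet> u m" unfolding nu_def by (simp add: power2_norm_eq_inner)
      also have "\<dots> = s m * s m * (e p \<bullet> e p) + 2 * s m * (e p \<bullet> y m) + y m \<bullet> y m"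
        unfolding u_def by (simp add: inner_add_left inner_add_right inner_commute algebra_simps)
      also have "\<dots> = 1 + (norm (y m))\<^sup>2" using s2[of m] ep1 yep'[of m]
        by (simp add: power2_norm_eq_inner)
      finally show ?thesis .
    qed
    have nu1: "nu m \<ge> 1" for m
    proof -
      have "(nu m)\<^sup>2 \<ge> 1\<^sup>2" using nu2[of m] by simp
      thus ?thesis unfolding nu_def by (rule power2_le_imp_le) simp
    qed
    have nx: "norm (x m) = 1" for m
    proof -
      have "u m \<noteq> 0" using nu1[of m] unfolding nu_def by auto
      thus ?thesis unfolding x_eq nu_def by simp
    qed
    have xu: "norm (x m - u m) \<le> r\<^sup>2" for m
    proof -
      have "x m - u m = (1 / nu m - 1) *\<^sub>R u m" unfolding x_eq by (simp add: algebra_simps)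
      hence "norm (x m - u m) = \<bar>1 / nu m - 1\<bar> * nu m" unfolding nu_def by simp
      also have "\<dots> = nu m - 1" using nu1[of m] by (simp add: field_simps)
      also have "\<dots> \<le> (nu m)\<^sup>2 - 1" using nu1[of m] by (simp add: power2_eq_square)
      also have "\<dots> = (norm (y m))\<^sup>2" using nu2[of m] by simp
      also have "\<dots> \<le> r\<^sup>2" using ry[of m] by (simp add: power_mono)
      finally show ?thesis .
    qed
    have r2r: "r\<^sup>2 \<le> r" using r0 r1 by (simp add: power2_eq_square mult_left_le)
    have xxs: "norm (x m - xs m) \<le> 2 * r" for m
    proof -
      have "x m - xs m = y m + (x m - u m)" unfolding u_def xs_def by simp
      hence "norm (x m - xs m) \<le> norm (y m) + norm (x m - u m)" by (metis norm_triangle_ineq)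
      thus ?thesis using ry[of m] xu[of m] r2r by linarith
    qed
    define K where "K = (\<lambda>j. Kw \<beta> V x i j)"
    define Ks where "Ks = (\<lambda>j. Kw \<beta> V xs i j)"
    have Ks0: "Ks j \<ge> 0" for j unfolding Ks_def by (rule Kw_nonneg)
    have Ks1: "(\<Sum>j\<in>UNIV. Ks j) = 1" unfolding Ks_def by (rule Kw_sum1)
    have Klip: "\<bar>K j - Ks j\<bar> \<le> L * r" for j
    proof -
      define a where "a = (\<lambda>l. \<beta> * (x i \<bullet> (V *v x l)))"
      define b where "b = (\<lambda>l. \<beta> * (xs i \<bullet> (V *v xs l)))"
      have ab: "\<bar>a l - b l\<bar> \<le> c * r" for l
      proof -
        have eq: "x i \<bullet> (V *v x l) - xs i \<bullet> (V *v xs l)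
            = (x i - xs i) \<bullet> (V *v x l) + xs i \<bullet> (V *v (x l - xs l))"
          by (simp add: inner_diff_left inner_diff_right matrix_vector_mult_diff_distrib)
        have t1: "\<bar>(x i - xs i) \<bullet> (V *v x l)\<bar> \<le> (2 * r) * B"
        proof -
          have "\<bar>(x i - xs i) \<bullet> (V *v x l)\<bar> \<le> norm (x i - xs i) * norm (V *v x l)" by (rule Cauchy_Schwarz_ineq2)
          also have "\<dots> \<le> (2 * r) * B" using xxs[of i] Bb[of "x l"] nx[of l] r0
            by (intro mult_mono) auto
          finally show ?thesis .
        qed
        have t2: "\<bar>xs i \<bullet> (V *v (x l - xs l))\<bar> \<le> B * (2 * r)"
        proof -
          have "\<bar>xs i \<bullet> (V *v (x l - xs l))\<bar> \<le> norm (xs i) * norm (V *v (x l - xs l))" by (rule Cauchy_Schwarz_ineq2)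
          also have "\<dots> \<le> B * (2 * r)" proof -
            have "B * norm (x l - xs l) \<le> B * (2 * r)" using xxs[of l] B0 by (intro mult_left_mono) auto
            thus ?thesis using nxs[of i] Bb[of "x l - xs l"] by simp
          qed
          finally show ?thesis .
        qed
        have "\<bar>a l - b l\<bar> = \<beta> * \<bar>x i \<bullet> (V *v x l) - xs i \<bullet> (V *v xs l)\<bar>"
          unfolding a_def b_def using bpos by (simp add: abs_mult right_diff_distrib[symmetric])
        also have "\<dots> \<le> \<beta> * ((2 * r) * B + B * (2 * r))" unfolding eq
          using bpos by (intro mult_left_mono order_trans[OF abs_triangle_ineq add_mono[OF t1 t2]]) auto
        finally show ?thesis unfolding c_def by (simp add: algebra_simps)
      qed
      have "\<bar>exp (a j) / (\<Sum>l\<in>UNIV. exp (a l)) - exp (b j) / (\<Sum>l\<in>UNIV. exp (b l))\<bar> \<le> 2 * exp (2 * c) * (c * r)"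
        by (rule softmax_lip[OF ab]) (use c0 r0 r1 in \<open>auto simp: mult_left_le\<close>)
      thus ?thesis unfolding K_def Ks_def Kw_def a_def b_def L_def by (simp add: algebra_simps)
    qed
    have sumKlip: "(\<Sum>j\<in>UNIV. \<bar>K j - Ks j\<bar> * M) \<le> N * L * r * M" if "M \<ge> 0" for M
    proof -
      have "(\<Sum>j\<in>UNIV. \<bar>K j - Ks j\<bar> * M) \<le> (\<Sum>j\<in>(UNIV::'n set). L * r * M)"
        by (intro sum_mono mult_right_mono Klip that)
      also have "\<dots> = N * L * r * M" unfolding N_def by simp
      finally show ?thesis .
    qed

    define z where "z = (\<Sum>j\<in>UNIV. Ks j *\<^sub>R (V *v y j))"
    define A where "A = lam p * (\<Sum>j\<in>UNIV. Ks j * s j)"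
    define D where "D = (\<Sum>j\<in>UNIV. (K j - Ks j) * (lam p * s j))"
    define R1 where "R1 = (\<Sum>j\<in>UNIV. Ks j *\<^sub>R (V *v (x j - u j)))"
    define R3 where "R3 = (\<Sum>j\<in>UNIV. (K j - Ks j) *\<^sub>R (V *v (x j - xs j)))"
    define w where "w = (\<Sum>j\<in>UNIV. K j *\<^sub>R (V *v x j))"
    define Pe where "Pe = e p - (x i \<bullet> e p) *\<^sub>R x i"
    define Q where "Q = Pe + s i *\<^sub>R y i"
    have Vxs: "V *v xs j = (lam p * s j) *\<^sub>R e p" for j
      unfolding xs_def by (simp add: matrix_vector_mult_scaleR eig)
    have Vx: "V *v x j = (lam p * s j) *\<^sub>R e p + V *v y j + V *v (x j - u j)" for j
    proof -
      have "x j = xs j + y j + (x j - u j)" unfolding u_def xs_def by simp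
      hence "V *v x j = V *v xs j + V *v y j + V *v (x j - u j)" by (metis matrix_vector_right_distrib)
      thus ?thesis using Vxs by simp
    qed
    have Vxxs: "V *v (x j - xs j) = V *v y j + V *v (x j - u j)" for j
    proof -
      have "x j - xs j = y j + (x j - u j)" unfolding u_def xs_def by simp
      thus ?thesis by (metis matrix_vector_right_distrib)
    qed
    have termeq: "K j *\<^sub>R (V *v x j) = (Ks j * (lam p * s j) + (K j - Ks j) * (lam p * s j)) *\<^sub>R e p
        + Ks j *\<^sub>R (V *v y j) + Ks j *\<^sub>R (V *v (x j - u j)) + (K j - Ks j) *\<^sub>R (V *v (x j - xs j))" for j
      unfolding Vx Vxxs by (simp add: algebra_simps)
    have wdec: "w = (A + D) *\<^sub>R e p + z + R1 + R3"
    proof -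
      have "w = (\<Sum>j\<in>UNIV. Ks j * (lam p * s j) + (K j - Ks j) * (lam p * s j)) *\<^sub>R e p + z + R1 + R3"
        unfolding w_def termeq z_def R1_def R3_def by (simp add: sum.distrib scaleR_sum_left scaleR_add_left)
      moreover have "(\<Sum>j\<in>UNIV. Ks j * (lam p * s j) + (K j - Ks j) * (lam p * s j)) = A + D"
        unfolding A_def D_def by (simp add: sum.distrib sum_distrib_left sum_subtractf algebra_simps)
      ultimately show ?thesis by simp
    qed
    have Aeq: "lam p * s i * (\<Sum>j\<in>UNIV. Ks j * s j) = A * s i" unfolding A_def by simp
    have Fx: "Fsys \<beta> V x i = w - (x i \<bullet> w) *\<^sub>R x i"
      unfolding Fsys_def Pperp_def K_def w_def ..
    have decomp: "Fsys \<beta> V x i - (- (lam p * s i * (\<Sum>j\<in>UNIV. Ks j * s j)) *\<^sub>R y i + z)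
       = A *\<^sub>R Q + D *\<^sub>R Pe - (x i \<bullet> z) *\<^sub>R x i + (R1 - (x i \<bullet> R1) *\<^sub>R x i) + (R3 - (x i \<bullet> R3) *\<^sub>R x i)"
      unfolding Fx wdec Aeq Q_def Pe_def by (simp add: inner_add_right algebra_simps)

    have nui0: "nu i > 0" using nu1[of i] by simp
    have xe: "x i \<bullet> e p = s i / nu i"
      proof -
      have "u i \<bullet> e p = s i" unfolding u_def by (simp add: inner_add_left ep1 yep)
      thus ?thesis unfolding x_eq by simp
    qed
    define g where "g = 1 - 1 / (nu i)\<^sup>2"
    have Qeq: "Q = g *\<^sub>R e p + (s i * g) *\<^sub>R y i"
    proof -
      have "Q = e p - ((s i / nu i) * (1 / nu i)) *\<^sub>R (s i *\<^sub>R e p + y i) + s i *\<^sub>R y i"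
        unfolding Q_def Pe_def xe by (simp add: x_eq u_def)
      also have "\<dots> = (1 - s i * s i / (nu i)\<^sup>2) *\<^sub>R e p + (s i - s i / (nu i)\<^sup>2) *\<^sub>R y i"
        by (simp add: algebra_simps power2_eq_square)
      also have "\<dots> = g *\<^sub>R e p + (s i * g) *\<^sub>R y i"
        unfolding g_def s2 by (simp add: algebra_simps)
      finally show ?thesis .
    qed
    have g0: "g \<ge> 0" unfolding g_def using nu1[of i] by (simp add: power_le_one)
    have gr: "g \<le> r\<^sup>2"
    proof -
      have "g = ((nu i)\<^sup>2 - 1) / (nu i)\<^sup>2" unfolding g_def using nui0 by (simp add: field_simps)
      also have "\<dots> = (norm (y i))\<^sup>2 / (nu i)\<^sup>2" using nu2[of i] by simp
      also have "\<dots> \<le> (norm (y i))\<^sup>2" proof -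
        have "(nu i)\<^sup>2 \<ge> 1" using nu2[of i] by simp
        thus ?thesis by (simp add: divide_le_eq mult_le_cancel_left1)
      qed
      also have "\<dots> \<le> r\<^sup>2" using ry[of i] by (simp add: power_mono)
      finally show ?thesis .
    qed
    have nQ: "norm Q \<le> 2 * r\<^sup>2"
    proof -
      have "norm Q \<le> norm (g *\<^sub>R e p) + norm ((s i * g) *\<^sub>R y i)" unfolding Qeq by (rule norm_triangle_ineq)
      also have "\<dots> = g + g * norm (y i)" using g0 nep sabs[of i] by (simp add: abs_mult)
      also have "\<dots> \<le> g + g * 1" using g0 ry[of i] r1 by (intro add_left_mono mult_left_mono) auto
      finally show ?thesis using gr by simp
    qed
    have nPe: "norm Pe \<le> 3 * r"
    proof -
      have "Pe = Q - s i *\<^sub>R y i" unfolding Q_def by simp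
      hence "norm Pe \<le> norm Q + norm (s i *\<^sub>R y i)" by (metis norm_triangle_ineq4)
      also have "norm (s i *\<^sub>R y i) = norm (y i)" using sabs[of i] by simp
      finally show ?thesis using nQ r2r ry[of i] by linarith
    qed
    have nA: "\<bar>A\<bar> \<le> \<Lambda>"
    proof -
      have "\<bar>\<Sum>j\<in>UNIV. Ks j * s j\<bar> \<le> (\<Sum>j\<in>UNIV. \<bar>Ks j * s j\<bar>)" by (rule sum_abs)
      also have "\<dots> = (\<Sum>j\<in>UNIV. Ks j)" using Ks0 sabs by (simp add: abs_mult)
      finally have "\<bar>\<Sum>j\<in>UNIV. Ks j * s j\<bar> \<le> 1" using Ks1 by simp
      thus ?thesis unfolding A_def \<Lambda>_def using \<Lambda>0 \<Lambda>_def
        by (simp add: abs_mult mult_left_le)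
    qed
    have nD: "\<bar>D\<bar> \<le> N * L * r * \<Lambda>"
    proof -
      have "\<bar>D\<bar> \<le> (\<Sum>j\<in>UNIV. \<bar>(K j - Ks j) * (lam p * s j)\<bar>)" unfolding D_def by (rule sum_abs)
      also have "\<dots> = (\<Sum>j\<in>UNIV. \<bar>K j - Ks j\<bar> * \<Lambda>)" unfolding \<Lambda>_def using sabs by (simp add: abs_mult)
      also have "\<dots> \<le> N * L * r * \<Lambda>" by (rule sumKlip[OF \<Lambda>0])
      finally show ?thesis .
    qed
    have nz: "norm z \<le> B * r"
    proof -
      have "norm z \<le> (\<Sum>j\<in>UNIV. norm (Ks j *\<^sub>R (V *v y j)))" unfolding z_def by (rule norm_sum)
      also have "\<dots> \<le> (\<Sum>j\<in>UNIV. Ks j * (B * r))"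
      proof (rule sum_mono)
        fix j
        have "norm (V *v y j) \<le> B * r" using Bb[of "y j"] ry[of j] B0
          by (meson mult_left_mono less_imp_le order_trans)
        thus "norm (Ks j *\<^sub>R (V *v y j)) \<le> Ks j * (B * r)" using Ks0[of j] by (simp add: mult_left_mono)
      qed
      also have "\<dots> = B * r" using Ks1 by (simp add: sum_distrib_right[symmetric])
      finally show ?thesis .
    qed
    have xsz: "xs i \<bullet> z = 0"
    proof -
      have "xs i \<bullet> (V *v y j) = 0" for j
        using sym_dot[OF Vsym, of "xs i" "y j"] Vxs[of i] yep'[of j] by simp
      thus ?thesis unfolding z_def by (simp add: inner_sum_right)
    qed
    have nxz: "norm ((x i \<bullet> z) *\<^sub>R x i) \<le> 2 * B * r\<^sup>2"
    proof -
      have "norm ((x i \<bullet> z) *\<^sub>R x i) = \<bar>(x i - xs i) \<bullet> z\<bar>" using nx[of i] xsz by (simp add: inner_diff_left)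
      also have "\<dots> \<le> norm (x i - xs i) * norm z" by (rule Cauchy_Schwarz_ineq2)
      also have "\<dots> \<le> (2 * r) * (B * r)" using xxs[of i] nz r0 by (intro mult_mono) auto
      finally show ?thesis by (simp add: power2_eq_square algebra_simps)
    qed
    have nR1: "norm R1 \<le> B * r\<^sup>2"
    proof -
      have "norm R1 \<le> (\<Sum>j\<in>UNIV. norm (Ks j *\<^sub>R (V *v (x j - u j))))" unfolding R1_def by (rule norm_sum)
      also have "\<dots> \<le> (\<Sum>j\<in>UNIV. Ks j * (B * r\<^sup>2))"
      proof (rule sum_mono)
        fix j
        have "norm (V *v (x j - u j)) \<le> B * r\<^sup>2" using Bb[of "x j - u j"] xu[of j] B0
          by (meson mult_left_mono less_imp_le order_trans)
        thus "norm (Ks j *\<^sub>R (V *v (x j - u j))) \<le> Ks j * (B * r\<^sup>2)" using Ks0[of j] by (simp add: mult_left_mono)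
      qed
      also have "\<dots> = B * r\<^sup>2" using Ks1 by (simp add: sum_distrib_right[symmetric])
      finally show ?thesis .
    qed
    have nR3: "norm R3 \<le> N * L * r * (B * (2 * r))"
    proof -
      have "norm R3 \<le> (\<Sum>j\<in>UNIV. norm ((K j - Ks j) *\<^sub>R (V *v (x j - xs j))))" unfolding R3_def by (rule norm_sum)
      also have "\<dots> \<le> (\<Sum>j\<in>UNIV. \<bar>K j - Ks j\<bar> * (B * (2 * r)))"
      proof (rule sum_mono)
        fix j
        have "norm (V *v (x j - xs j)) \<le> B * (2 * r)" using Bb[of "x j - xs j"] xxs[of j] B0
          by (meson mult_left_mono less_imp_le order_trans)
        thus "norm ((K j - Ks j) *\<^sub>R (V *v (x j - xs j))) \<le> \<bar>K j - Ks j\<bar> * (B * (2 * r))"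
          by (simp add: mult_left_mono)
      qed
      also have "\<dots> \<le> N * L * r * (B * (2 * r))" by (rule sumKlip) (use B0 r0 in simp)
      finally show ?thesis .
    qed
    have t1: "norm (A *\<^sub>R Q) \<le> \<Lambda> * (2 * r\<^sup>2)"
    proof -
      have "norm (A *\<^sub>R Q) = \<bar>A\<bar> * norm Q" by simp
      also have "\<dots> \<le> \<Lambda> * (2 * r\<^sup>2)" using nA nQ \<Lambda>0 by (intro mult_mono) auto
      finally show ?thesis .
    qed
    have t2: "norm (D *\<^sub>R Pe) \<le> (N * L * r * \<Lambda>) * (3 * r)"
    proof -
      have "norm (D *\<^sub>R Pe) = \<bar>D\<bar> * norm Pe" by simp
      also have "\<dots> \<le> (N * L * r * \<Lambda>) * (3 * r)" using nD nPe N0 L0 r0 \<Lambda>0 by (intro mult_mono) auto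
      finally show ?thesis .
    qed
    have t4: "norm (R1 - (x i \<bullet> R1) *\<^sub>R x i) \<le> 2 * (B * r\<^sup>2)"
      using normP[OF nx[of i], of R1] nR1 by linarith
    have t5: "norm (R3 - (x i \<bullet> R3) *\<^sub>R x i) \<le> 2 * (N * L * r * (B * (2 * r)))"
      using normP[OF nx[of i], of R3] nR3 by linarith
    define T1 where "T1 = A *\<^sub>R Q"
    define T2 where "T2 = D *\<^sub>R Pe"
    define T3 where "T3 = (x i \<bullet> z) *\<^sub>R x i"
    define T4 where "T4 = R1 - (x i \<bullet> R1) *\<^sub>R x i"
    define T5 where "T5 = R3 - (x i \<bullet> R3) *\<^sub>R x i"
    have dec2: "Fsys \<beta> V x i - (- (lam p * s i * (\<Sum>j\<in>UNIV. Ks j * s j)) *\<^sub>R y i + z) = T1 + T2 - T3 + T4 + T5"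
      unfolding T1_def T2_def T3_def T4_def T5_def by (rule decomp)
    have tri: "norm (T1 + T2 - T3 + T4 + T5) \<le> norm T1 + norm T2 + norm T3 + norm T4 + norm T5"
    proof -
      have "norm (T1 + T2 - T3 + T4 + T5) \<le> norm (T1 + T2 - T3 + T4) + norm T5" by (rule norm_triangle_ineq)
      also have "norm (T1 + T2 - T3 + T4) \<le> norm (T1 + T2 - T3) + norm T4" by (rule norm_triangle_ineq)
      also have "norm (T1 + T2 - T3) \<le> norm (T1 + T2) + norm T3" by (rule norm_triangle_ineq4)
      also have "norm (T1 + T2) \<le> norm T1 + norm T2" by (rule norm_triangle_ineq)
      finally show ?thesis by simp
    qed
    have bnd: "norm T1 + norm T2 + norm T3 + norm T4 + norm T5 \<le>
        \<Lambda> * (2 * r\<^sup>2) + (N * L * r * \<Lambda>) * (3 * r) + 2 * B * r\<^sup>2 + 2 * (B * r\<^sup>2) + 2 * (N * L * r * (B * (2 * r)))"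
      unfolding T1_def T2_def T3_def T4_def T5_def
      by (intro add_mono t1 t2 nxz t4 t5)
    have ceq: "\<Lambda> * (2 * r\<^sup>2) + (N * L * r * \<Lambda>) * (3 * r) + 2 * B * r\<^sup>2 + 2 * (B * r\<^sup>2) + 2 * (N * L * r * (B * (2 * r)))
        = C * r\<^sup>2" unfolding C_def power2_eq_square by (simp add: algebra_simps)
    have main: "norm (Fsys \<beta> V x i - (- (lam p * s i * (\<Sum>j\<in>UNIV. Ks j * s j)) *\<^sub>R y i + z)) \<le> C * r\<^sup>2"
      unfolding dec2 using tri bnd ceq by linarith
    show "norm (Fsys \<beta> V (\<lambda>m. (1 / norm (s m *\<^sub>R e p + y m)) *\<^sub>R (s m *\<^sub>R e p + y m)) i
                 - (- (lam p * s i * (\<Sum>j\<in>UNIV. Kw \<beta> V (\<lambda>m. s m *\<^sub>R e p) i j * s j)) *\<^sub>R y i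
                    + (\<Sum>j\<in>UNIV. Kw \<beta> V (\<lambda>m. s m *\<^sub>R e p) i j *\<^sub>R (V *v y j))))
            \<le> C * (Max (range (\<lambda>m. norm (y m))))\<^sup>2"
      using main unfolding x_def Ks_def xs_def z_def r_def .
  qed
qed

end
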